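(* Let $\mathcal{X}\subseteq\mathbb{R}^d$ be nonempty, closed and convex, and let $f:\mathbb{R}^d\to\mathbb{R}$ be differentiable (not necessarily convex) and $L$-smooth on an open set containing $\mathcal{X}$; assume the constrained minimum $f_\star=\min_{x\in\mathcal{X}}f(x)$ is attained. For $\gamma>0$ define $G_\gamma(x):=\frac1\gamma\big(x-\Pi_{\mathcal{X}}(x-\gamma\nabla f(x))\big)$, where $\Pi_{\mathcal{X}}$ is the Euclidean projection onto $\mathcal{X}$. Suppose there are $\mu>0$ and $\gamma\in(0,1/L]$ such that $\frac12\|G_\gamma(x)\|^2\ge\mu(f(x)-f_\star)$ for all $x\in\mathcal{X}$. Let $x_0\in\mathcal{X}$ and $x_{k+1}\in\operatorname{arg\,min}_{z\in\mathcal{X}\cap\mathcal{B}(x_k,t_k)}\langle\nabla f(x_k),z\rangle$ with $t_k:=\gamma\|G_\gamma(x_k)\|$. Then for every $k\ge0$, $f(x_{k+1})\le f(x_k)-\frac\gamma2\|G_\gamma(x_k)\|^2$, and consequently $f(x_k)-f_\star\le(1-\gamma\mu)^k(f(x_0)-f_\star)$ for all $k\ge0$. In particular, for $\gamma=1/L$, $f(x_k)-f_\star\le(1-\mu/L)^k(f(x_0)-f_\star)$.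
   Context: $\|\cdot\|$ is the Euclidean norm, $\mathcal{B}(x,t):=\{y:\|y-x\|\le t\}$; $L$-smooth means $\nabla f$ is $L$-Lipschitz. *)

theory Defs
  imports "HOL-Analysis.Analysis"
begin

definition grad_map :: "'a::euclidean_space set \<Rightarrow> ('a \<Rightarrow> 'a) \<Rightarrow> real \<Rightarrow> 'a \<Rightarrow> 'a" where
  "grad_map X g \<gamma> x = (1 / \<gamma>) *\<^sub>R (x - closest_point X (x - \<gamma> *\<^sub>R g x))"

end

theory Submission
  imports Defs
begin
lemma descent:
  fixes f :: "'a::euclidean_space \<Rightarrow> real" and g :: "'a \<Rightarrow> 'a"
  assumes grad: "\<And>y. (f has_derivative (\<lambda>h. g y \<bullet> h)) (at y)"
    and smooth: "\<And>y z. y \<in> U \<Longrightarrow> z \<in> U \<Longrightarrow> norm (g y - g z) \<le> L * norm (y - z)"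
    and cX: "convex X" and XU: "X \<subseteq> U" and x: "x \<in> X" and y: "y \<in> X"
  shows "f y \<le> f x + g x \<bullet> (y - x) + L / 2 * (norm (y - x))\<^sup>2"
proof -
  define d where "d = y - x"
  define \<phi> where "\<phi> t = f (x + t *\<^sub>R d) - t * (g x \<bullet> d) - L / 2 * t\<^sup>2 * (norm d)\<^sup>2" for t
  have "\<phi> 1 \<le> \<phi> 0"
  proof (rule DERIV_nonpos_imp_nonincreasing[of 0 1 \<phi>])
    fix t :: real assume t: "0 \<le> t" "t \<le> 1"
    have lin: "((\<lambda>t. x + t *\<^sub>R d) has_derivative (\<lambda>h. h *\<^sub>R d)) (at t)"
      by (auto intro!: derivative_eq_intros)
    have H: "((\<lambda>t. f (x + t *\<^sub>R d)) has_derivative (\<lambda>h. g (x + t *\<^sub>R d) \<bullet> (h *\<^sub>R d))) (at t)"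
      using has_derivative_compose[OF lin grad] by (simp add: o_def)
    then have D1: "((\<lambda>t. f (x + t *\<^sub>R d)) has_real_derivative (g (x + t *\<^sub>R d) \<bullet> d)) (at t)"
      proof -
      have e: "(\<lambda>h. h * (g (x + t *\<^sub>R d) \<bullet> d)) = (*) (g (x + t *\<^sub>R d) \<bullet> d)" by (rule ext) simp
      show ?thesis unfolding has_field_derivative_def using H e by simp
    qed
    have "DERIV \<phi> t :> (g (x + t *\<^sub>R d) \<bullet> d - g x \<bullet> d - L / 2 * (2 * t) * (norm d)\<^sup>2)"
      unfolding \<phi>_def
      by (auto intro!: derivative_eq_intros D1)
    moreover have "g (x + t *\<^sub>R d) \<bullet> d - g x \<bullet> d - L / 2 * (2 * t) * (norm d)\<^sup>2 \<le> 0"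
    proof -
      have xt: "x + t *\<^sub>R d \<in> X"
        using convexD_alt[OF cX x y, of t] t unfolding d_def by (simp add: algebra_simps)
      have "g (x + t *\<^sub>R d) \<bullet> d - g x \<bullet> d = (g (x + t *\<^sub>R d) - g x) \<bullet> d"
        by (simp add: inner_diff_left)
      also have "\<dots> \<le> norm (g (x + t *\<^sub>R d) - g x) * norm d" by (rule norm_cauchy_schwarz)
      also have "\<dots> \<le> L * norm (t *\<^sub>R d) * norm d"
        using smooth[of "x + t *\<^sub>R d" x] xt x XU by (auto intro!: mult_right_mono)
      also have "\<dots> = L * t * (norm d)\<^sup>2" using t by (simp add: power2_eq_square)
      finally show ?thesis by simp
    qed
    ultimately show "\<exists>y. DERIV \<phi> t :> y \<and> y \<le> 0" by blast
  qed simp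
  thus ?thesis unfolding \<phi>_def d_def by simp
qed
theorem theorem8:
  fixes X U :: "'a::euclidean_space set"
    and f :: "'a \<Rightarrow> real" and g :: "'a \<Rightarrow> 'a"
    and L \<mu> \<gamma> :: real and xstar :: 'a and x :: "nat \<Rightarrow> 'a"
  assumes X_ne: "X \<noteq> {}" and X_closed: "closed X" and X_convex: "convex X"
    and grad: "\<And>y. (f has_derivative (\<lambda>h. g y \<bullet> h)) (at y)"
    and U_open: "open U" and XU: "X \<subseteq> U"
    and L_pos: "L > 0"
    and smooth: "\<And>y z. y \<in> U \<Longrightarrow> z \<in> U \<Longrightarrow> norm (g y - g z) \<le> L * norm (y - z)"
    and xstar_in: "xstar \<in> X" and xstar_min: "\<And>y. y \<in> X \<Longrightarrow> f xstar \<le> f y"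
    and mu_pos: "\<mu> > 0"
    and gamma_pos: "\<gamma> > 0" and gamma_le: "\<gamma> \<le> 1 / L"
    and PL: "\<And>y. y \<in> X \<Longrightarrow> (1/2) * (norm (grad_map X g \<gamma> y))\<^sup>2 \<ge> \<mu> * (f y - f xstar)"
    and x0: "x 0 \<in> X"
    and step_feas: "\<And>k. x (Suc k) \<in> X \<inter> cball (x k) (\<gamma> * norm (grad_map X g \<gamma> (x k)))"
    and step_min: "\<And>k z. z \<in> X \<inter> cball (x k) (\<gamma> * norm (grad_map X g \<gamma> (x k))) \<Longrightarrow>
                      g (x k) \<bullet> x (Suc k) \<le> g (x k) \<bullet> z"
  shows "(\<forall>k. f (x (Suc k)) \<le> f (x k) - (\<gamma> / 2) * (norm (grad_map X g \<gamma> (x k)))\<^sup>2)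
       \<and> (\<forall>k. f (x k) - f xstar \<le> (1 - \<gamma> * \<mu>) ^ k * (f (x 0) - f xstar))
       \<and> (\<gamma> = 1 / L \<longrightarrow> (\<forall>k. f (x k) - f xstar \<le> (1 - \<mu> / L) ^ k * (f (x 0) - f xstar)))"
proof -
  have xin: "x k \<in> X" for k by (cases k) (use x0 step_feas in auto)
  have step: "f (x (Suc k)) \<le> f (x k) - (\<gamma> / 2) * (norm (grad_map X g \<gamma> (x k)))\<^sup>2" for k
  proof -
    define p where "p = closest_point X (x k - \<gamma> *\<^sub>R g (x k))"
    define n where "n = norm (x k - p)"
    have nG: "norm (grad_map X g \<gamma> (x k)) = n / \<gamma>"
      unfolding grad_map_def p_def n_def using gamma_pos by simp
    have r: "\<gamma> * norm (grad_map X g \<gamma> (x k)) = n" using nG gamma_pos by simp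
    have pX: "p \<in> X" unfolding p_def using closest_point_in_set[OF X_closed X_ne] .
    have "p \<in> X \<inter> cball (x k) (\<gamma> * norm (grad_map X g \<gamma> (x k)))"
      using pX r by (simp add: n_def dist_norm)
    hence m: "g (x k) \<bullet> x (Suc k) \<le> g (x k) \<bullet> p" by (rule step_min)
    have nx: "norm (x (Suc k) - x k) \<le> n" using step_feas[of k] r by (simp add: dist_norm norm_minus_commute)
    have dot: "((x k - \<gamma> *\<^sub>R g (x k)) - p) \<bullet> (x k - p) \<le> 0"
      unfolding p_def by (rule closest_point_dot[OF X_convex X_closed xin])
    have "n\<^sup>2 = (x k - p) \<bullet> (x k - p)" unfolding n_def by (simp add: power2_norm_eq_inner)
    also have "\<dots> \<le> \<gamma> * (g (x k) \<bullet> (x k - p))" using dot by (simp add: inner_diff_left)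
    finally have n2: "n\<^sup>2 \<le> \<gamma> * (g (x k) \<bullet> (x k - p))" .
    have D: "f (x (Suc k)) \<le> f (x k) + g (x k) \<bullet> (x (Suc k) - x k) + L / 2 * (norm (x (Suc k) - x k))\<^sup>2"
      by (rule descent[OF grad smooth X_convex XU xin xin])
    have "(norm (x (Suc k) - x k))\<^sup>2 \<le> n\<^sup>2" using nx by (simp add: power_mono)
    hence "L / 2 * (norm (x (Suc k) - x k))\<^sup>2 \<le> L / 2 * n\<^sup>2" using L_pos by simp
    also have "\<dots> \<le> n\<^sup>2 / (2 * \<gamma>)"
    proof -
      have "L * \<gamma> \<le> 1" using gamma_le L_pos by (simp add: field_simps)
      hence "L * \<gamma> * n\<^sup>2 \<le> n\<^sup>2" using mult_right_mono[of "L * \<gamma>" 1 "n\<^sup>2"] by simp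
      thus ?thesis using gamma_pos by (simp add: field_simps)
    qed
    finally have A: "L / 2 * (norm (x (Suc k) - x k))\<^sup>2 \<le> n\<^sup>2 / (2 * \<gamma>)" .
    have B: "g (x k) \<bullet> (x (Suc k) - x k) \<le> - n\<^sup>2 / \<gamma>"
    proof -
      have "g (x k) \<bullet> (x (Suc k) - x k) \<le> g (x k) \<bullet> (p - x k)" using m by (simp add: inner_diff_right)
      moreover have "n\<^sup>2 / \<gamma> \<le> g (x k) \<bullet> (x k - p)" using n2 gamma_pos by (simp add: field_simps)
      moreover have "g (x k) \<bullet> (p - x k) = - (g (x k) \<bullet> (x k - p))" by (simp add: inner_diff_right)
      ultimately show ?thesis by simp
    qed
    have "(\<gamma> / 2) * (norm (grad_map X g \<gamma> (x k)))\<^sup>2 = n\<^sup>2 / (2 * \<gamma>)"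
      using r gamma_pos by (simp add: field_simps power2_eq_square) (metis mult.assoc mult.commute)
    moreover have "- n\<^sup>2 / \<gamma> + n\<^sup>2 / (2 * \<gamma>) = - (n\<^sup>2 / (2 * \<gamma>))" using gamma_pos by (simp add: field_simps)
    ultimately show ?thesis using D A B by linarith
  qed
  define a where "a k = f (x k) - f xstar" for k
  have a_nn: "a k \<ge> 0" for k unfolding a_def using xstar_min xin by simp
  have a_step: "a (Suc k) \<le> (1 - \<gamma> * \<mu>) * a k" for k
  proof -
    have "\<gamma> * (\<mu> * a k) \<le> \<gamma> * ((1/2) * (norm (grad_map X g \<gamma> (x k)))\<^sup>2)"
      using mult_left_mono[OF PL[OF xin[of k]], of \<gamma>] gamma_pos unfolding a_def by simp
    thus ?thesis using step[of k] unfolding a_def by (simp add: algebra_simps)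
  qed
  have conv: "a k \<le> (1 - \<gamma> * \<mu>) ^ k * a 0" for k
  proof (cases "a 0 = 0")
    case True
    have "a k \<le> a 0"
    proof (induction k)
      case (Suc k)
      have "a (Suc k) \<le> a k" using step[of k] unfolding a_def using gamma_pos by (smt (verit) zero_le_power2 divide_nonneg_pos mult_nonneg_nonneg)
      thus ?case using Suc by simp
    qed simp
    thus ?thesis using True by simp
  next
    case False
    hence a0: "a 0 > 0" using a_nn[of 0] by simp
    have c: "1 - \<gamma> * \<mu> \<ge> 0"
    proof (rule ccontr)
      assume "\<not> ?thesis"
      hence "(1 - \<gamma> * \<mu>) * a 0 < 0" using a0 by (simp add: mult_neg_pos)
      thus False using a_step[of 0] a_nn[of 1] by simp
    qed
    show ?thesis
    proof (induction k)
      case (Suc k)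
      have "a (Suc k) \<le> (1 - \<gamma> * \<mu>) * a k" by (rule a_step)
      also have "\<dots> \<le> (1 - \<gamma> * \<mu>) * ((1 - \<gamma> * \<mu>) ^ k * a 0)" using Suc c by (rule mult_left_mono)
      finally show ?case by simp
    qed simp
  qed
  show ?thesis
  proof (intro conjI allI impI)
    fix k show "f (x (Suc k)) \<le> f (x k) - (\<gamma> / 2) * (norm (grad_map X g \<gamma> (x k)))\<^sup>2" by (rule step)
  next
    fix k show "f (x k) - f xstar \<le> (1 - \<gamma> * \<mu>) ^ k * (f (x 0) - f xstar)" using conv[of k] unfolding a_def .
  next
    fix k assume "\<gamma> = 1 / L"
    thus "f (x k) - f xstar \<le> (1 - \<mu> / L) ^ k * (f (x 0) - f xstar)" using conv[of k] unfolding a_def by simp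
  qed
qed

end
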